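(* Let $B$ be a path-connected space, $b_0\in B$, and let $p\colon E\to B$ be a disk-hedgehog covering. Then for every small loop $\alpha$ at $b_0$, the class $[\alpha]$ is the neutral element of the monodromy group $\pi(p,b_0)$.
   Context: All maps are continuous; a Peano space is a connected, locally path-connected space. For a class $\mathcal{P}$ of spaces, $p\colon E\to B$ is a $\mathcal{P}$-covering if for every $e_0\in E$, $X\in\mathcal{P}$, $x_0\in X$ and map $f\colon X\to B$ with $f(x_0)=p(e_0)$ there is a unique map $g\colon X\to E$ with $p\circ g=f$, $g(x_0)=e_0$. A directed wedge is $(Z,z_0)=\bigvee_{s\in S}(Z_s,z_s)$, a wedge of pointed Peano spaces indexed by a directed set $S$, topologized so that $U\subset Z\setminus\{z_0\}$ is open iff each $U\cap Z_s$ is open, and $U\ni z_0$ is an open neighborhood of $z_0$ iff each $U\cap Z_s$ is open and there is $t\in S$ with $Z_s\subset U$ for all $s>t$. A disk-hedgehog is a directed wedge with each $Z_s\cong D^2$; a disk-hedgehog covering is a $\mathcal{P}$-covering for $\mathcal{P}$ the class of all disk-hedgehogs (paths lift uniquely). The monodromy group $\pi(p,b_0)$ is the set of loops at $b_0$ modulo $\alpha\sim\beta$ iff any lifts $\tilde\alpha,\tilde\beta$ with $\tilde\alpha(0)=\tilde\beta(0)$ satisfy $\tilde\alpha(1)=\tilde\beta(1)$, with product induced by concatenation; $[\alpha]$ is neutral iff all lifts of $\alpha$ are loops. A loop $\alpha$ at $b_0$ is small if for every neighborhood $U$ of $b_0$ in $B$, $\alpha$ is homotopic relative to $\{0,1\}$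 (endpoints fixed at $b_0$) to a loop contained in $U$. *)

theory Defs
  imports "HOL-Analysis.Analysis"
begin

text \<open>The closed disk is modelled as the closed unit disk of the complex plane.
A directed wedge of pointed disks indexed by a directed set (S, R) (R a preorder
on S in which any two elements have an upper bound), the disk with index s being
pointed at zb s, is modelled on the type ('i \<times> complex) option: None is the wedge
point, and Some (s, z) is the point z \<noteq> zb s of the disk with index s.\<close>

definition directed_set :: "'i set \<Rightarrow> ('i \<Rightarrow> 'i \<Rightarrow> bool) \<Rightarrow> bool" where
  "directed_set S R \<longleftrightarrow> S \<noteq> {} \<and> (\<forall>s\<in>S. R s s)
     \<and> (\<forall>a\<in>S. \<forall>b\<in>S. \<forall>c\<in>S. R a b \<and> R b c \<longrightarrow> R a c)
     \<and> (\<forall>a\<in>S. \<forall>b\<in>S. \<exists>c\<in>S. R a c \<and> R b c)"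

definition strictly_above :: "('i \<Rightarrow> 'i \<Rightarrow> bool) \<Rightarrow> 'i \<Rightarrow> 'i \<Rightarrow> bool" where
  "strictly_above R s t \<longleftrightarrow> R t s \<and> \<not> R s t"

definition hedgehog_carrier :: "'i set \<Rightarrow> ('i \<Rightarrow> complex) \<Rightarrow> ('i \<times> complex) option set" where
  "hedgehog_carrier S zb = insert None {Some (s, z) | s z. s \<in> S \<and> z \<in> cball 0 1 \<and> z \<noteq> zb s}"

definition spike :: "('i \<Rightarrow> complex) \<Rightarrow> 'i \<Rightarrow> complex \<Rightarrow> ('i \<times> complex) option" where
  "spike zb s z = (if z = zb s then None else Some (s, z))"

definition hedgehog_top :: "'i set \<Rightarrow> ('i \<Rightarrow> 'i \<Rightarrow> bool) \<Rightarrow> ('i \<Rightarrow> complex)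
    \<Rightarrow> ('i \<times> complex) option topology" where
  "hedgehog_top S R zb = topology (\<lambda>U. U \<subseteq> hedgehog_carrier S zb
      \<and> (\<forall>s\<in>S. openin (top_of_set (cball 0 1)) {z \<in> cball 0 1. spike zb s z \<in> U})
      \<and> (None \<in> U \<longrightarrow> (\<exists>t\<in>S. \<forall>s\<in>S. strictly_above R s t \<longrightarrow> spike zb s ` cball 0 1 \<subseteq> U)))"

definition is_disk_hedgehog :: "('i \<times> complex) option topology \<Rightarrow> bool" where
  "is_disk_hedgehog X \<longleftrightarrow> (\<exists>S R zb. directed_set S R \<and> (\<forall>s\<in>S. zb s \<in> cball 0 1)
      \<and> X = hedgehog_top S R zb)"

definition P_covering :: "('x topology \<Rightarrow> bool) \<Rightarrow> 'e topology \<Rightarrow> 'b topology \<Rightarrow> ('e \<Rightarrow> 'b) \<Rightarrow> bool" where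
  "P_covering P E B p \<longleftrightarrow> continuous_map E B p \<and>
     (\<forall>e0\<in>topspace E. \<forall>X x0 f. P X \<and> x0 \<in> topspace X \<and> continuous_map X B f \<and> f x0 = p e0 \<longrightarrow>
        (\<exists>g. continuous_map X E g \<and> (\<forall>x\<in>topspace X. p (g x) = f x) \<and> g x0 = e0 \<and>
           (\<forall>g'. continuous_map X E g' \<and> (\<forall>x\<in>topspace X. p (g' x) = f x) \<and> g' x0 = e0
                 \<longrightarrow> (\<forall>x\<in>topspace X. g' x = g x))))"

text \<open>Since a
class of spaces cannot range over all types, the index sets are taken to be sets of
subsets of B (large enough e.g. for directed sets of neighbourhoods).\<close>
definition disk_hedgehog_covering :: "'e topology \<Rightarrow> 'b topology \<Rightarrow> ('e \<Rightarrow> 'b) \<Rightarrow> bool" where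
  "disk_hedgehog_covering E B p \<longleftrightarrow>
     P_covering (is_disk_hedgehog :: ('b set \<times> complex) option topology \<Rightarrow> bool) E B p"

definition is_lift :: "'e topology \<Rightarrow> ('e \<Rightarrow> 'b) \<Rightarrow> (real \<Rightarrow> 'b) \<Rightarrow> (real \<Rightarrow> 'e) \<Rightarrow> bool" where
  "is_lift E p \<alpha> a \<longleftrightarrow> pathin E a \<and> (\<forall>t\<in>{0..1}. p (a t) = \<alpha> t)"

definition loop_at :: "'b topology \<Rightarrow> 'b \<Rightarrow> (real \<Rightarrow> 'b) \<Rightarrow> bool" where
  "loop_at B b0 \<alpha> \<longleftrightarrow> pathin B \<alpha> \<and> \<alpha> 0 = b0 \<and> \<alpha> 1 = b0"

definition monodromy_equiv :: "'e topology \<Rightarrow> ('e \<Rightarrow> 'b) \<Rightarrow> (real \<Rightarrow> 'b) \<Rightarrow> (real \<Rightarrow> 'b) \<Rightarrow> bool" where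
  "monodromy_equiv E p \<alpha> \<beta> \<longleftrightarrow>
     (\<forall>a b. is_lift E p \<alpha> a \<and> is_lift E p \<beta> b \<and> a 0 = b 0 \<longrightarrow> a 1 = b 1)"

text \<open>[\<alpha>] is the neutral element of \<pi>(p,b0): all lifts of \<alpha> are loops.\<close>
definition monodromy_neutral :: "'e topology \<Rightarrow> ('e \<Rightarrow> 'b) \<Rightarrow> (real \<Rightarrow> 'b) \<Rightarrow> bool" where
  "monodromy_neutral E p \<alpha> \<longleftrightarrow> (\<forall>a. is_lift E p \<alpha> a \<longrightarrow> a 1 = a 0)"

definition small_loop :: "'b topology \<Rightarrow> 'b \<Rightarrow> (real \<Rightarrow> 'b) \<Rightarrow> bool" where
  "small_loop B b0 \<alpha> \<longleftrightarrow> loop_at B b0 \<alpha> \<and>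
     (\<forall>U. openin B U \<and> b0 \<in> U \<longrightarrow>
        (\<exists>\<beta>. loop_at B b0 \<beta> \<and> \<beta> ` {0..1} \<subseteq> U \<and>
            homotopic_with (\<lambda>h. h 0 = b0 \<and> h 1 = b0) (top_of_set {0..1}) B \<alpha> \<beta>))"

end

theory Submission
  imports Defs
begin


definition hh_open where
  "hh_open S R zb = (\<lambda>U. U \<subseteq> hedgehog_carrier S zb
      \<and> (\<forall>s\<in>S. openin (top_of_set (cball 0 1)) {z \<in> cball 0 1. spike zb s z \<in> U})
      \<and> (None \<in> U \<longrightarrow> (\<exists>t\<in>S. \<forall>s\<in>S. strictly_above R s t \<longrightarrow> spike zb s ` cball 0 1 \<subseteq> U)))"

lemma hedgehog_top_eq: "hedgehog_top S R zb = topology (hh_open S R zb)"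
  unfolding hedgehog_top_def hh_open_def ..

lemma hh_openD0: "hh_open S R zb U \<Longrightarrow> U \<subseteq> hedgehog_carrier S zb"
  by (simp add: hh_open_def)
lemma hh_openD1: "hh_open S R zb U \<Longrightarrow> s \<in> S \<Longrightarrow> openin (top_of_set (cball 0 1)) {z \<in> cball 0 1. spike zb s z \<in> U}"
  by (simp add: hh_open_def)
lemma hh_openD2: "hh_open S R zb U \<Longrightarrow> None \<in> U \<Longrightarrow> (\<exists>t\<in>S. \<forall>s\<in>S. strictly_above R s t \<longrightarrow> spike zb s ` cball 0 1 \<subseteq> U)"
  by (simp add: hh_open_def)

lemma istop_hh:
  assumes "directed_set S R"
  shows "istopology (hh_open S R zb)"
  unfolding istopology_def
proof (intro conjI allI impI)
  fix U V assume U: "hh_open S R zb U" and V: "hh_open S R zb V"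
  show "hh_open S R zb (U \<inter> V)"
    unfolding hh_open_def
  proof (intro conjI ballI impI)
    show "U \<inter> V \<subseteq> hedgehog_carrier S zb" using hh_openD0[OF U] by blast
  next
    fix s assume "s \<in> S"
    have eq: "{z \<in> cball 0 1. spike zb s z \<in> U \<inter> V} = {z \<in> cball 0 1. spike zb s z \<in> U} \<inter> {z \<in> cball 0 1. spike zb s z \<in> V}"
      by blast
    have o1: "openin (top_of_set (cball 0 1)) {z \<in> cball 0 1. spike zb s z \<in> U}"
      using hh_openD1[OF U \<open>s \<in> S\<close>] .
    have o2: "openin (top_of_set (cball 0 1)) {z \<in> cball 0 1. spike zb s z \<in> V}"
      using hh_openD1[OF V \<open>s \<in> S\<close>] .
    show "openin (top_of_set (cball 0 1)) {z \<in> cball 0 1. spike zb s z \<in> U \<inter> V}"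
      unfolding eq using o1 o2 by (rule openin_Int)
  next
    assume "None \<in> U \<inter> V"
    then obtain t1 t2 where t1: "t1 \<in> S" "\<forall>s\<in>S. strictly_above R s t1 \<longrightarrow> spike zb s ` cball 0 1 \<subseteq> U"
      and t2: "t2 \<in> S" "\<forall>s\<in>S. strictly_above R s t2 \<longrightarrow> spike zb s ` cball 0 1 \<subseteq> V"
      using hh_openD2[OF U] hh_openD2[OF V] \<open>None \<in> U \<inter> V\<close> by auto
    then obtain t3 where t3: "t3 \<in> S" "R t1 t3" "R t2 t3" using assms unfolding directed_set_def by blast
    have tr: "\<forall>a\<in>S. \<forall>b\<in>S. \<forall>c\<in>S. R a b \<and> R b c \<longrightarrow> R a c" using assms unfolding directed_set_def by blast
    show "\<exists>t\<in>S. \<forall>s\<in>S. strictly_above R s t \<longrightarrow> spike zb s ` cball 0 1 \<subseteq> U \<inter> V"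
    proof (intro bexI[of _ t3] ballI impI)
      fix s assume s: "s \<in> S" "strictly_above R s t3"
      have Rs: "R t3 s" "\<not> R s t3" using s(2) unfolding strictly_above_def by auto
      have "R t1 s" using tr t1(1) t3 s(1) Rs(1) by blast
      moreover have "\<not> R s t1" using tr t1(1) t3 s(1) Rs(2) by blast
      moreover have "R t2 s" using tr t2(1) t3 s(1) Rs(1) by blast
      moreover have "\<not> R s t2" using tr t2(1) t3 s(1) Rs(2) by blast
      ultimately have "strictly_above R s t1" "strictly_above R s t2"
        unfolding strictly_above_def by auto
      then show "spike zb s ` cball 0 1 \<subseteq> U \<inter> V" using s t1 t2 by blast
    qed fact
  qed
next
  fix K assume K: "\<forall>U\<in>K. hh_open S R zb U"
  show "hh_open S R zb (\<Union>K)"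
    unfolding hh_open_def
  proof (intro conjI ballI impI)
    show "\<Union>K \<subseteq> hedgehog_carrier S zb"
    proof (rule Union_least)
      fix U assume "U \<in> K"
      with K have "hh_open S R zb U" by (rule bspec)
      then show "U \<subseteq> hedgehog_carrier S zb" by (rule hh_openD0)
    qed
  next
    fix s assume "s \<in> S"
    have eq: "{z \<in> cball 0 1. spike zb s z \<in> \<Union>K} = (\<Union>U\<in>K. {z \<in> cball 0 1. spike zb s z \<in> U})"
      by blast
    have "openin (top_of_set (cball 0 1)) {z \<in> cball 0 1. spike zb s z \<in> U}" if "U \<in> K" for U
    proof -
      have "hh_open S R zb U" using K that by (rule bspec)
      then show ?thesis using \<open>s \<in> S\<close> by (rule hh_openD1)
    qed
    then show "openin (top_of_set (cball 0 1)) {z \<in> cball 0 1. spike zb s z \<in> \<Union>K}"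
      unfolding eq by (intro openin_Union) auto
  next
    assume "None \<in> \<Union>K"
    then obtain U where "U \<in> K" "None \<in> U" by blast
    have hU: "hh_open S R zb U" using K \<open>U \<in> K\<close> by (rule bspec)
    obtain t where "t\<in>S" "\<forall>s\<in>S. strictly_above R s t \<longrightarrow> spike zb s ` cball 0 1 \<subseteq> U"
      using hh_openD2[OF hU \<open>None \<in> U\<close>] by blast
    then show "\<exists>t\<in>S. \<forall>s\<in>S. strictly_above R s t \<longrightarrow> spike zb s ` cball 0 1 \<subseteq> \<Union>K"
      using \<open>U \<in> K\<close> by blast
  qed
qed

lemma openin_hh:
  assumes "directed_set S R"
  shows "openin (hedgehog_top S R zb) U \<longleftrightarrow> hh_open S R zb U"
  by (simp add: hedgehog_top_eq istop_hh[OF assms])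

lemma spike_in_carrier: "s \<in> S \<Longrightarrow> z \<in> cball 0 1 \<Longrightarrow> spike zb s z \<in> hedgehog_carrier S zb"
  unfolding spike_def hedgehog_carrier_def by auto

lemma topspace_hh:
  assumes "directed_set S R"
  shows "topspace (hedgehog_top S R zb) = hedgehog_carrier S zb"
proof -
  have "hh_open S R zb (hedgehog_carrier S zb)"
    unfolding hh_open_def
  proof (intro conjI ballI impI)
    fix s assume "s \<in> S"
    then have "{z \<in> cball 0 1. spike zb s z \<in> hedgehog_carrier S zb} = topspace (top_of_set (cball 0 1))"
      using spike_in_carrier by auto
    then show "openin (top_of_set (cball 0 1)) {z \<in> cball 0 1. spike zb s z \<in> hedgehog_carrier S zb}"
      by (metis openin_topspace)
  next
    obtain t where "t \<in> S" using assms unfolding directed_set_def by blast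
    have "\<forall>s\<in>S. strictly_above R s t \<longrightarrow> spike zb s ` cball 0 1 \<subseteq> hedgehog_carrier S zb"
      using spike_in_carrier[of _ S] by auto
    then show "\<exists>t\<in>S. \<forall>s\<in>S. strictly_above R s t \<longrightarrow> spike zb s ` cball 0 1 \<subseteq> hedgehog_carrier S zb"
      using \<open>t \<in> S\<close> by blast
  qed auto
  then have "openin (hedgehog_top S R zb) (hedgehog_carrier S zb)" using openin_hh[OF assms] by blast
  then have "hedgehog_carrier S zb \<subseteq> topspace (hedgehog_top S R zb)" by (rule openin_subset)
  moreover have "topspace (hedgehog_top S R zb) \<subseteq> hedgehog_carrier S zb"
    using hh_openD0 openin_hh[OF assms, of zb "topspace (hedgehog_top S R zb)"] by simp
  ultimately show ?thesis by blast
qed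

lemma spike_cont:
  assumes "directed_set S R" "s \<in> S"
  shows "continuous_map (top_of_set (cball 0 1)) (hedgehog_top S R zb) (spike zb s)"
  unfolding continuous_map
proof (intro conjI allI impI)
  show "spike zb s ` topspace (top_of_set (cball 0 1)) \<subseteq> topspace (hedgehog_top S R zb)"
    using topspace_hh[OF assms(1)] spike_in_carrier[OF assms(2)] by auto
next
  fix U assume "openin (hedgehog_top S R zb) U"
  then have "hh_open S R zb U" using openin_hh[OF assms(1)] by blast
  then show "openin (top_of_set (cball 0 1)) {x \<in> topspace (top_of_set (cball 0 1)). spike zb s x \<in> U}"
    using hh_openD1 assms(2) by simp
qed

lemma hh_cont_from:
  assumes "directed_set S R"
    and c: "\<And>s. s \<in> S \<Longrightarrow> continuous_map (top_of_set (cball 0 1)) Y (F \<circ> spike zb s)"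
    and n: "F None \<in> topspace Y"
    and ev: "\<And>V. openin Y V \<Longrightarrow> F None \<in> V \<Longrightarrow> \<exists>t\<in>S. \<forall>s\<in>S. strictly_above R s t \<longrightarrow> (\<forall>z\<in>cball 0 1. F (spike zb s z) \<in> V)"
  shows "continuous_map (hedgehog_top S R zb) Y F"
  unfolding continuous_map
proof (intro conjI allI impI)
  show "F ` topspace (hedgehog_top S R zb) \<subseteq> topspace Y"
  proof
    fix y assume "y \<in> F ` topspace (hedgehog_top S R zb)"
    then obtain x where x: "x \<in> hedgehog_carrier S zb" "y = F x" using topspace_hh[OF assms(1)] by auto
    show "y \<in> topspace Y"
    proof (cases x)
      case None then show ?thesis using n x by simp
    next
      case (Some w)
      then obtain s z where "w = (s, z)" "s \<in> S" "z \<in> cball 0 1" "z \<noteq> zb s"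
        using x unfolding hedgehog_carrier_def by auto
      then have "x = spike zb s z" using Some unfolding spike_def by simp
      then show ?thesis using c[OF \<open>s \<in> S\<close>] \<open>z \<in> cball 0 1\<close> x
        unfolding continuous_map by auto
    qed
  qed
next
  fix V assume V: "openin Y V"
  show "openin (hedgehog_top S R zb) {x \<in> topspace (hedgehog_top S R zb). F x \<in> V}"
    unfolding openin_hh[OF assms(1)] hh_open_def topspace_hh[OF assms(1)]
  proof (intro conjI ballI impI)
    fix s assume s: "s \<in> S"
    have "{z \<in> cball 0 1. spike zb s z \<in> {x \<in> hedgehog_carrier S zb. F x \<in> V}}
        = {z \<in> topspace (top_of_set (cball 0 1)). (F \<circ> spike zb s) z \<in> V}"
      using spike_in_carrier[OF s] by auto
    then show "openin (top_of_set (cball 0 1)) {z \<in> cball 0 1. spike zb s z \<in> {x \<in> hedgehog_carrier S zb. F x \<in> V}}"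
      using c[OF s] V unfolding continuous_map by simp
  next
    assume "None \<in> {x \<in> hedgehog_carrier S zb. F x \<in> V}"
    then obtain t where "t\<in>S" "\<forall>s\<in>S. strictly_above R s t \<longrightarrow> (\<forall>z\<in>cball 0 1. F (spike zb s z) \<in> V)"
      using ev V by blast
    then show "\<exists>t\<in>S. \<forall>s\<in>S. strictly_above R s t \<longrightarrow> spike zb s ` cball 0 1 \<subseteq> {x \<in> hedgehog_carrier S zb. F x \<in> V}"
      using spike_in_carrier[of _ S] by (intro bexI[of _ t]) auto
  qed auto
qed

lemma hh_nbhd:
  assumes "directed_set S R" "continuous_map (hedgehog_top S R zb) Y g" "openin Y W" "g None \<in> W"
  shows "\<exists>t\<in>S. \<forall>s\<in>S. strictly_above R s t \<longrightarrow> (\<forall>z\<in>cball 0 1. g (spike zb s z) \<in> W)"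
proof -
  have o: "openin (hedgehog_top S R zb) {x \<in> topspace (hedgehog_top S R zb). g x \<in> W}"
    using assms(2,3) unfolding continuous_map by blast
  have "None \<in> topspace (hedgehog_top S R zb)"
    using topspace_hh[OF assms(1)] unfolding hedgehog_carrier_def by auto
  then have "None \<in> {x \<in> topspace (hedgehog_top S R zb). g x \<in> W}" using assms(4) by simp
  from hh_openD2[OF o[unfolded openin_hh[OF assms(1)]] this]
  obtain t where "t \<in> S" "\<forall>s\<in>S. strictly_above R s t \<longrightarrow> spike zb s ` cball 0 1 \<subseteq> {x \<in> topspace (hedgehog_top S R zb). g x \<in> W}"
    by blast
  then show ?thesis by blast
qed



abbreviation zh :: "'i \<Rightarrow> complex" where "zh \<equiv> (\<lambda>_. - (1/2))"

definition hz :: "('i \<times> complex) option \<Rightarrow> complex" where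
  "hz x = (case x of None \<Rightarrow> - (1/2) | Some w \<Rightarrow> snd w)"

lemma hz_spike [simp]: "hz (spike zh s z) = z"
  unfolding hz_def spike_def by auto

lemma hz_carrier: "x \<in> hedgehog_carrier S zh \<Longrightarrow> hz x \<in> cball 0 1"
  unfolding hz_def hedgehog_carrier_def by auto

definition X1 :: "('i set \<times> complex) option topology" where
  "X1 = hedgehog_top {UNIV} (\<lambda>_ _. True) zh"

lemma dir1: "directed_set {UNIV} (\<lambda>_ _. True)"
  unfolding directed_set_def by auto

lemma disk_X1: "is_disk_hedgehog X1"
  unfolding is_disk_hedgehog_def X1_def
  by (intro exI[of _ "{UNIV}"] exI[of _ "\<lambda>_ _. True"] exI[of _ zh]) (auto simp: dir1)

lemma X1_cont:
  assumes "continuous_map (top_of_set (cball 0 1)) Y \<phi>"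
  shows "continuous_map X1 Y (\<phi> \<circ> hz)"
  unfolding X1_def
proof (rule hh_cont_from[OF dir1])
  fix s :: "'i set"
  have "(\<phi> \<circ> hz) \<circ> spike zh s = \<phi>" by (rule ext) simp
  then show "continuous_map (top_of_set (cball 0 1)) Y ((\<phi> \<circ> hz) \<circ> spike zh s)"
    using assms by simp
next
  have "- (1/2) \<in> cball (0::complex) 1" by simp
  then show "(\<phi> \<circ> hz) None \<in> topspace Y"
    using assms unfolding continuous_map hz_def by auto
next
  fix V
  show "\<exists>t\<in>{UNIV}. \<forall>s\<in>{UNIV}. strictly_above (\<lambda>_ _. True) s t \<longrightarrow> (\<forall>z\<in>cball 0 1. (\<phi> \<circ> hz) (spike zh s z) \<in> V)"
    unfolding strictly_above_def by simp
qed

lemma topspace_X1: "topspace (X1 :: ('i set \<times> complex) option topology) = hedgehog_carrier {UNIV} zh"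
  unfolding X1_def by (rule topspace_hh[OF dir1])

lemma spike_X1: "z \<in> cball 0 1 \<Longrightarrow> spike zh (UNIV::'i set) z \<in> topspace (X1 :: ('i set \<times> complex) option topology)"
  unfolding topspace_X1 by (rule spike_in_carrier) auto

lemma cov_D:
  assumes "P_covering P E B p" "e0 \<in> topspace E" "P X" "x0 \<in> topspace X" "continuous_map X B f" "f x0 = p e0"
  obtains g where "continuous_map X E g" "\<forall>x\<in>topspace X. p (g x) = f x" "g x0 = e0"
    "\<And>g'. continuous_map X E g' \<Longrightarrow> (\<forall>x\<in>topspace X. p (g' x) = f x) \<Longrightarrow> g' x0 = e0 \<Longrightarrow> \<forall>x\<in>topspace X. g' x = g x"
proof -
  have H: "\<forall>e0\<in>topspace E. \<forall>X x0 f. P X \<and> x0 \<in> topspace X \<and> continuous_map X B f \<and> f x0 = p e0 \<longrightarrow>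
        (\<exists>g. continuous_map X E g \<and> (\<forall>x\<in>topspace X. p (g x) = f x) \<and> g x0 = e0 \<and>
           (\<forall>g'. continuous_map X E g' \<and> (\<forall>x\<in>topspace X. p (g' x) = f x) \<and> g' x0 = e0
                 \<longrightarrow> (\<forall>x\<in>topspace X. g' x = g x)))"
    using assms(1) unfolding P_covering_def by (rule conjunct2)
  have "P X \<and> x0 \<in> topspace X \<and> continuous_map X B f \<and> f x0 = p e0" using assms(3-6) by blast
  from H[rule_format, OF assms(2) this]
  obtain g where g: "continuous_map X E g" "\<forall>x\<in>topspace X. p (g x) = f x" "g x0 = e0"
     "\<forall>g'. continuous_map X E g' \<and> (\<forall>x\<in>topspace X. p (g' x) = f x) \<and> g' x0 = e0
                 \<longrightarrow> (\<forall>x\<in>topspace X. g' x = g x)"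
    by (elim exE conjE) (rule that)
  show ?thesis
  proof (rule that[OF g(1,2,3)])
    fix g' assume "continuous_map X E g'" "\<forall>x\<in>topspace X. p (g' x) = f x" "g' x0 = e0"
    then show "\<forall>x\<in>topspace X. g' x = g x" using g(4) by blast
  qed
qed

lemma disk_lift:
  fixes E :: "'e topology" and B :: "'b topology" and \<phi> :: "complex \<Rightarrow> 'b"
  assumes cov: "disk_hedgehog_covering E B p"
    and phi: "continuous_map (top_of_set (cball 0 1)) B \<phi>"
    and e0: "e0 \<in> topspace E" "\<phi> (- (1/2)) = p e0"
  shows "\<exists>G. continuous_map (top_of_set (cball 0 1)) E G \<and> (\<forall>z\<in>cball 0 1. p (G z) = \<phi> z) \<and> G (- (1/2)) = e0
     \<and> (\<forall>G'. continuous_map (top_of_set (cball 0 1)) E G' \<and> (\<forall>z\<in>cball 0 1. p (G' z) = \<phi> z) \<and> G' (- (1/2)) = e0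
            \<longrightarrow> (\<forall>z\<in>cball 0 1. G' z = G z))"
proof -
  let ?X = "X1 :: ('b set \<times> complex) option topology"
  have fc: "continuous_map ?X B (\<phi> \<circ> hz)" by (rule X1_cont[OF phi])
  have None: "None \<in> topspace ?X" unfolding topspace_X1 hedgehog_carrier_def by simp
  have f0: "(\<phi> \<circ> hz) None = p e0" using e0 by (simp add: hz_def)
  have cov': "P_covering (is_disk_hedgehog :: ('b set \<times> complex) option topology \<Rightarrow> bool) E B p"
    using cov unfolding disk_hedgehog_covering_def .
  obtain g where g: "continuous_map ?X E g" "\<forall>x\<in>topspace ?X. p (g x) = (\<phi> \<circ> hz) x" "g None = e0"
    and gu: "\<And>g'. continuous_map ?X E g' \<Longrightarrow> (\<forall>x\<in>topspace ?X. p (g' x) = (\<phi> \<circ> hz) x) \<Longrightarrow> g' None = e0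
                 \<Longrightarrow> (\<forall>x\<in>topspace ?X. g' x = g x)"
    by (rule cov_D[OF cov' e0(1) disk_X1 None fc f0]) blast
  define G where "G = g \<circ> spike zh (UNIV :: 'b set)"
  have Gc: "continuous_map (top_of_set (cball 0 1)) E G"
    unfolding G_def X1_def by (rule continuous_map_compose[OF spike_cont[OF dir1] g(1)[unfolded X1_def]]) simp
  have Gl: "\<forall>z\<in>cball 0 1. p (G z) = \<phi> z"
    using g(2) spike_X1 unfolding G_def by fastforce
  have G0: "G (- (1/2)) = e0" using g(3) unfolding G_def spike_def by simp
  show ?thesis
  proof (intro exI[of _ G] conjI Gc Gl G0 allI impI ballI)
    fix G' z assume G': "continuous_map (top_of_set (cball 0 1)) E G' \<and> (\<forall>z\<in>cball 0 1. p (G' z) = \<phi> z) \<and> G' (- (1/2)) = e0"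
      and z: "z \<in> cball (0::complex) 1"
    have "continuous_map ?X E (G' \<circ> hz)" using X1_cont G' by blast
    moreover have "\<forall>x\<in>topspace ?X. p ((G' \<circ> hz) x) = (\<phi> \<circ> hz) x"
      using G' hz_carrier unfolding topspace_X1 by fastforce
    moreover have "(G' \<circ> hz) None = e0" using G' by (simp add: hz_def)
    ultimately have "\<forall>x\<in>topspace ?X. (G' \<circ> hz) x = g x" by (rule gu)
    moreover have "spike zh (UNIV::'b set) z \<in> topspace ?X" using spike_X1[OF z] .
    ultimately have "(G' \<circ> hz) (spike zh (UNIV::'b set) z) = g (spike zh UNIV z)" by blast
    then show "G' z = G z" unfolding G_def by simp
  qed
qed



definition rr :: "real \<Rightarrow> real" where "rr x = max 0 (min 1 (x + 1/2))"

lemma rr_cont: "continuous_on S rr"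
  unfolding rr_def by (intro continuous_intros)

lemma rr_range: "rr x \<in> {0..1}" unfolding rr_def by auto

lemma rr_id: "t \<in> {0..1} \<Longrightarrow> rr (t - 1/2) = t" unfolding rr_def by auto

lemma rRe_cont: "continuous_map (top_of_set (cball (0::complex) 1)) (top_of_set {0..1}) (\<lambda>z. rr (Re z))"
proof -
  have "continuous_on (cball (0::complex) 1) (\<lambda>z. rr (Re z))"
    using continuous_on_compose2[OF rr_cont[of UNIV] continuous_on_Re[OF continuous_on_id]] by auto
  then show ?thesis using rr_range by auto
qed

lemma rIm_cont: "continuous_map (top_of_set (cball (0::complex) 1)) (top_of_set {0..1}) (\<lambda>z. rr (Im z))"
proof -
  have "continuous_on (cball (0::complex) 1) (\<lambda>z. rr (Im z))"
    using continuous_on_compose2[OF rr_cont[of UNIV] continuous_on_Im[OF continuous_on_id]] by auto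
  then show ?thesis using rr_range by auto
qed

lemma cov_cont: "disk_hedgehog_covering E B p \<Longrightarrow> continuous_map E B p"
  unfolding disk_hedgehog_covering_def P_covering_def by blast

lemma pathin_01: "pathin E a \<Longrightarrow> t \<in> {0..1} \<Longrightarrow> a t \<in> topspace E"
  unfolding pathin_def continuous_map by auto

lemma UL:
  fixes E :: "'e topology" and B :: "'b topology"
  assumes cov: "disk_hedgehog_covering E B p" and a: "pathin E a" and a': "pathin E a'"
    and eq: "\<forall>t\<in>{0..1}. p (a t) = p (a' t)" and a0: "a 0 = a' 0"
  shows "\<forall>t\<in>{0..1}. a t = a' t"
proof
  fix t :: real assume t: "t \<in> {0..1}"
  have pc: "continuous_map E B p" using cov by (rule cov_cont)
  have ac: "continuous_map (top_of_set (cball 0 1)) E (a \<circ> (\<lambda>z. rr (Re z)))"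
    using continuous_map_compose[OF rRe_cont] a unfolding pathin_def by blast
  have ac': "continuous_map (top_of_set (cball 0 1)) E (a' \<circ> (\<lambda>z. rr (Re z)))"
    using continuous_map_compose[OF rRe_cont] a' unfolding pathin_def by blast
  have phic: "continuous_map (top_of_set (cball 0 1)) B (p \<circ> (a \<circ> (\<lambda>z. rr (Re z))))"
    using continuous_map_compose[OF ac pc] .
  have e0: "a 0 \<in> topspace E" using pathin_01[OF a] by simp
  have r0: "rr (Re (- (1/2) :: complex)) = 0" unfolding rr_def by simp
  have b0: "(p \<circ> (a \<circ> (\<lambda>z. rr (Re z)))) (- (1/2)) = p (a 0)" using r0 by simp
  from disk_lift[OF cov phic e0 b0]
  obtain G where G: "\<forall>G'. continuous_map (top_of_set (cball 0 1)) E G' \<and> (\<forall>z\<in>cball 0 1. p (G' z) = (p \<circ> (a \<circ> (\<lambda>z. rr (Re z)))) z) \<and> G' (- (1/2)) = a 0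
            \<longrightarrow> (\<forall>z\<in>cball 0 1. G' z = G z)"
    by blast
  have l1: "\<forall>z\<in>cball 0 1. p ((a \<circ> (\<lambda>z. rr (Re z))) z) = (p \<circ> (a \<circ> (\<lambda>z. rr (Re z)))) z" by simp
  have h1: "(a \<circ> (\<lambda>z. rr (Re z))) (- (1/2)) = a 0" using r0 by simp
  have 1: "\<forall>z\<in>cball 0 1. (a \<circ> (\<lambda>z. rr (Re z))) z = G z"
    using G[rule_format, OF conjI[OF ac conjI[OF l1 h1]]] by blast
  have l2: "\<forall>z\<in>cball 0 1. p ((a' \<circ> (\<lambda>z. rr (Re z))) z) = (p \<circ> (a \<circ> (\<lambda>z. rr (Re z)))) z"
  proof
    fix z :: complex assume "z \<in> cball 0 1"
    have "rr (Re z) \<in> {0..1}" by (rule rr_range)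
    then show "p ((a' \<circ> (\<lambda>z. rr (Re z))) z) = (p \<circ> (a \<circ> (\<lambda>z. rr (Re z)))) z" using eq by simp
  qed
  have h2: "(a' \<circ> (\<lambda>z. rr (Re z))) (- (1/2)) = a 0" using r0 a0 by simp
  have 2: "\<forall>z\<in>cball 0 1. (a' \<circ> (\<lambda>z. rr (Re z))) z = G z"
    using G[rule_format, OF conjI[OF ac' conjI[OF l2 h2]]] by blast
  have z: "complex_of_real (t - 1/2) \<in> cball 0 1" unfolding mem_cball_0 norm_of_real using t by auto
  have q1: "(a \<circ> (\<lambda>z. rr (Re z))) (complex_of_real (t - 1/2)) = G (complex_of_real (t - 1/2))"
    using 1 z by (rule bspec)
  have q2: "(a' \<circ> (\<lambda>z. rr (Re z))) (complex_of_real (t - 1/2)) = G (complex_of_real (t - 1/2))"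
    using 2 z by (rule bspec)
  have "rr (Re (complex_of_real (t - 1/2))) = t" unfolding Re_complex_of_real by (rule rr_id[OF t])
  then show "a t = a' t" using q1 q2 unfolding o_def by simp
qed

lemma const_lift:
  assumes cov: "disk_hedgehog_covering E B p" and b: "pathin E b" and c: "\<forall>t\<in>{0..1}. p (b t) = p (b 0)"
  shows "\<forall>t\<in>{0..1}. b t = b 0"
proof -
  have "b 0 \<in> topspace E" using pathin_01[OF b] by simp
  then have pa: "pathin E (\<lambda>t. b 0)" unfolding pathin_def continuous_map_const by blast
  have "\<forall>t\<in>{0..1}. p (b t) = p ((\<lambda>t. b 0) t)" using c by blast
  from UL[OF cov b pa this] show ?thesis by blast
qed

lemma indist:
  fixes E :: "'e topology" and B :: "'b topology"
  assumes cov: "disk_hedgehog_covering E B p" and e: "e0 \<in> topspace E" "e1 \<in> topspace E" "p e0 = p e1"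
    and W: "\<And>W. openin E W \<Longrightarrow> e0 \<in> W \<Longrightarrow> e1 \<in> W"
  shows "e1 = e0"
proof -
  have pc: "continuous_map E B p" using cov by (rule cov_cont)
  have phic: "continuous_map (top_of_set (cball (0::complex) 1)) B (\<lambda>z. p e0)"
  proof -
    have "p e0 \<in> topspace B" using continuous_map_image_subset_topspace[OF pc] e(1) by blast
    then show ?thesis by simp
  qed
  have b0: "(\<lambda>z::complex. p e0) (- (1/2)) = p e0" by simp
  from disk_lift[OF cov phic e(1) b0]
  obtain G where G: "\<forall>G'. continuous_map (top_of_set (cball 0 1)) E G' \<and> (\<forall>z\<in>cball 0 1. p (G' z) = p e0) \<and> G' (- (1/2::complex)) = e0
            \<longrightarrow> (\<forall>z\<in>cball 0 1. G' z = G z)"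
    by blast
  have c1: "continuous_map (top_of_set (cball (0::complex) 1)) E (\<lambda>z. e0)"
    using e(1) by simp
  let ?G2 = "\<lambda>z::complex. if z = - (1/2) then e0 else e1"
  have c2: "continuous_map (top_of_set (cball (0::complex) 1)) E ?G2"
    unfolding continuous_map
  proof (intro conjI allI impI)
    show "?G2 ` topspace (top_of_set (cball 0 1)) \<subseteq> topspace E" using e by auto
  next
    fix U assume U: "openin E U"
    show "openin (top_of_set (cball 0 1)) {x \<in> topspace (top_of_set (cball 0 1)). ?G2 x \<in> U}"
    proof (cases "e0 \<in> U")
      case True
      then have "e1 \<in> U" using W U by blast
      then have "{x \<in> topspace (top_of_set (cball (0::complex) 1)). ?G2 x \<in> U} = topspace (top_of_set (cball 0 1))"
        using True by auto
      then show ?thesis by (metis openin_topspace)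
    next
      case False
      show ?thesis
      proof (cases "e1 \<in> U")
        case True
        then have "{x \<in> topspace (top_of_set (cball (0::complex) 1)). ?G2 x \<in> U} = cball 0 1 \<inter> (- {- (1/2)})"
          using False by auto
        moreover have "open (- {- (1/2) :: complex})" by auto
        ultimately show ?thesis unfolding openin_open by blast
      next
        case False2: False
        then have "{x \<in> topspace (top_of_set (cball (0::complex) 1)). ?G2 x \<in> U} = {}"
          using False by auto
        then show ?thesis using openin_empty by metis
      qed
    qed
  qed
  have l1: "\<forall>z\<in>cball 0 1. p ((\<lambda>z. e0) z) = p e0" by simp
  have f1: "\<forall>z\<in>cball 0 1. (\<lambda>z. e0) z = G z" using G[rule_format, OF conjI[OF c1 conjI[OF l1 refl]]] by blast
  have l2: "\<forall>z\<in>cball 0 1. p (?G2 z) = p e0" using e(3) by simp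
  have h2: "?G2 (- (1/2)) = e0" by simp
  have f2: "\<forall>z\<in>cball 0 1. ?G2 z = G z" using G[rule_format, OF conjI[OF c2 conjI[OF l2 h2]]] by blast
  have z0: "(0::complex) \<in> cball 0 1" by simp
  have "?G2 0 = G 0" using f2 z0 by (rule bspec)
  moreover have "e0 = G 0" using f1 z0 by simp
  ultimately show ?thesis by simp
qed



definition PP :: "real \<Rightarrow> real \<Rightarrow> complex" where
  "PP t x = complex_of_real (x - 1/2) + \<i> * complex_of_real (t - 1/2)"

lemma PP_Re [simp]: "Re (PP t x) = x - 1/2" unfolding PP_def by simp
lemma PP_Im [simp]: "Im (PP t x) = t - 1/2" unfolding PP_def by simp

lemma PP_in: "t \<in> {0..1} \<Longrightarrow> x \<in> {0..1} \<Longrightarrow> PP t x \<in> cball 0 1"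
proof -
  assume "t \<in> {0..1}" "x \<in> {0..1}"
  then have "\<bar>Re (PP t x)\<bar> + \<bar>Im (PP t x)\<bar> \<le> 1" by auto
  then show ?thesis using cmod_le[of "PP t x"] unfolding mem_cball_0 by linarith
qed

lemma PP_cont_x: "t \<in> {0..1} \<Longrightarrow> continuous_map (top_of_set {0..1}) (top_of_set (cball 0 1)) (\<lambda>x. PP t x)"
proof -
  assume t: "t \<in> {0..1}"
  have "continuous_on {0..1} (\<lambda>x. PP t x)" unfolding PP_def by (intro continuous_intros)
  then show ?thesis using PP_in[OF t] by auto
qed

lemma PP_cont_t: "x \<in> {0..1} \<Longrightarrow> continuous_map (top_of_set {0..1}) (top_of_set (cball 0 1)) (\<lambda>t. PP t x)"
proof -
  assume x: "x \<in> {0..1}"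
  have "continuous_on {0..1} (\<lambda>t. PP t x)" unfolding PP_def by (intro continuous_intros)
  then show ?thesis using PP_in x by auto
qed

lemma HL:
  fixes E :: "'e topology" and B :: "'b topology" and H :: "real \<times> real \<Rightarrow> 'b"
  assumes cov: "disk_hedgehog_covering E B p"
    and Hc: "continuous_map (prod_topology (top_of_set {0..1}) (top_of_set {0..1})) B H"
    and H0: "\<forall>x. H (0, x) = \<alpha> x" and H1: "\<forall>x. H (1, x) = \<gamma> x"
    and Hs: "\<forall>t\<in>{0..1}. H (t, 0) = b0 \<and> H (t, 1) = b0"
    and a: "is_lift E p \<alpha> a" and c: "is_lift E p \<gamma> c" and ac: "a 0 = c 0"
  shows "a 1 = c 1"
proof -
  let ?q = "\<lambda>z::complex. (rr (Im z), rr (Re z))"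
  have qc: "continuous_map (top_of_set (cball 0 1)) (prod_topology (top_of_set {0..1}) (top_of_set {0..1})) ?q"
    unfolding continuous_map_pairwise o_def using rIm_cont rRe_cont by simp
  have phic: "continuous_map (top_of_set (cball 0 1)) B (H \<circ> ?q)" by (rule continuous_map_compose[OF qc Hc])
  have ap: "pathin E a" and al: "\<forall>t\<in>{0..1}. p (a t) = \<alpha> t" using a unfolding is_lift_def by auto
  have cp: "pathin E c" and cl: "\<forall>t\<in>{0..1}. p (c t) = \<gamma> t" using c unfolding is_lift_def by auto
  have e0: "a 0 \<in> topspace E" using pathin_01[OF ap] by simp
  have "rr (Im (- (1/2) :: complex)) = 1/2" "rr (Re (- (1/2) :: complex)) = 0" unfolding rr_def by auto
  then have "(H \<circ> ?q) (- (1/2)) = b0" using Hs by simp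
  moreover have "p (a 0) = b0"
  proof -
    have "H (0, 0) = b0" using Hs by simp
    moreover have "H (0, 0) = \<alpha> 0" using H0 by simp
    moreover have "p (a 0) = \<alpha> 0" using al by simp
    ultimately show ?thesis by simp
  qed
  ultimately have base: "(H \<circ> ?q) (- (1/2)) = p (a 0)" by simp
  obtain G where Gc: "continuous_map (top_of_set (cball 0 1)) E G"
    and Gl: "\<forall>z\<in>cball 0 1. p (G z) = (H \<circ> ?q) z" and G0: "G (- (1/2)) = a 0"
    using disk_lift[OF cov phic e0 base] by blast
  have liftP: "p (G (PP t x)) = H (t, x)" if "t \<in> {0..1}" "x \<in> {0..1}" for t x
    using Gl PP_in[OF that] rr_id that by simp
  have pathx: "pathin E (\<lambda>x. G (PP t x))" if "t \<in> {0..1}" for t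
    unfolding pathin_def using continuous_map_compose[OF PP_cont_x[OF that] Gc] by (simp add: o_def)
  have patht: "pathin E (\<lambda>t. G (PP t x))" if "x \<in> {0..1}" for x
    unfolding pathin_def using continuous_map_compose[OF PP_cont_t[OF that] Gc] by (simp add: o_def)
  have z01: "(0::real) \<in> {0..1}" "(1::real) \<in> {0..1}" "(1/2::real) \<in> {0..1}" by auto
  have "\<forall>t\<in>{0..1}. p (G (PP t 0)) = p (G (PP 0 0))" using liftP Hs z01 by simp
  from const_lift[OF cov patht[OF z01(1)] this]
  have W: "\<forall>t\<in>{0..1}. G (PP t 0) = G (PP 0 0)" .
  have "PP (1/2) 0 = - (1/2)" unfolding PP_def by simp
  then have W0: "G (PP 0 0) = a 0" using W z01 G0 by metis
  have W1: "G (PP 1 0) = a 0" using W W0 z01 by metis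
  have "\<forall>x\<in>{0..1}. p (G (PP 0 x)) = p (a x)" using liftP z01 H0 al by simp
  from UL[OF cov pathx[OF z01(1)] ap this W0]
  have A1: "G (PP 0 1) = a 1" using z01 by blast
  have "\<forall>t\<in>{0..1}. p (G (PP t 1)) = p (G (PP 0 1))" using liftP Hs z01 by simp
  from const_lift[OF cov patht[OF z01(2)] this]
  have V: "G (PP 1 1) = G (PP 0 1)" using z01 by blast
  have "\<forall>x\<in>{0..1}. p (G (PP 1 x)) = p (c x)" using liftP z01 H1 cl by simp
  from UL[OF cov pathx[OF z01(2)] cp this] W1 ac
  have C1: "G (PP 1 1) = c 1" using z01 by auto
  show ?thesis using A1 V C1 by simp
qed



lemma homL:
  fixes E :: "'e topology" and B :: "'b topology"
  assumes cov: "disk_hedgehog_covering E B p"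
    and h: "homotopic_with (\<lambda>h. h 0 = b0 \<and> h 1 = b0) (top_of_set {0..1}) B \<alpha> \<gamma>"
    and a: "is_lift E p \<alpha> a" and c: "is_lift E p \<gamma> c" and ac: "a 0 = c 0"
  shows "a 1 = c 1"
proof -
  obtain H :: "real \<times> real \<Rightarrow> 'b" where Hc: "continuous_map (prod_topology (top_of_set {0..1}) (top_of_set {0..1})) B H"
    and H0: "\<forall>x. H (0, x) = \<alpha> x" and H1: "\<forall>x. H (1, x) = \<gamma> x"
    and Hs': "\<forall>t\<in>{0..1}. H (t, 0) = b0 \<and> H (t, 1) = b0"
    using h unfolding homotopic_with_def by blast
  show ?thesis by (rule HL[OF cov Hc H0 H1 Hs' a c ac])
qed

lemma null_in_min:
  fixes B :: "'b topology"
  assumes t: "\<And>V. openin B V \<Longrightarrow> b0 \<in> V \<Longrightarrow> T \<subseteq> V"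
    and b0: "b0 \<in> topspace B"
    and \<beta>: "loop_at B b0 \<beta>" "\<beta> ` {0..1} \<subseteq> T"
  shows "homotopic_with (\<lambda>h. h 0 = b0 \<and> h 1 = b0) (top_of_set {0..1}) B \<beta> (\<lambda>x. b0)"
proof -
  define K where "K = (\<lambda>(s::real, x::real). if s < 1 then \<beta> x else b0)"
  have bp: "pathin B \<beta>" "\<beta> 0 = b0" "\<beta> 1 = b0" using \<beta>(1) unfolding loop_at_def by auto
  have Kc: "continuous_map (prod_topology (top_of_set {0..1}) (top_of_set {0..1})) B K"
    unfolding continuous_map
  proof (intro conjI allI impI)
    show "K ` topspace (prod_topology (top_of_set {0..1}) (top_of_set {0..1})) \<subseteq> topspace B"
      using pathin_01[OF bp(1)] b0 unfolding K_def by auto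
  next
    fix V assume V: "openin B V"
    show "openin (prod_topology (top_of_set {0..1}) (top_of_set {0..1}))
            {x \<in> topspace (prod_topology (top_of_set {0..1}) (top_of_set {0..1})). K x \<in> V}"
    proof (cases "b0 \<in> V")
      case True
      then have "T \<subseteq> V" using t V by blast
      then have bV: "\<forall>x\<in>{0..1}. \<beta> x \<in> V" using \<beta>(2) by blast
      then have "{x \<in> topspace (prod_topology (top_of_set {0..1}) (top_of_set {0..1})). K x \<in> V}
              = topspace (prod_topology (top_of_set {0..1::real}) (top_of_set {0..1::real}))"
        using True unfolding K_def by auto
      then show ?thesis by (metis openin_topspace)
    next
      case False
      have eq: "{x \<in> topspace (prod_topology (top_of_set {0..1}) (top_of_set {0..1})). K x \<in> V}
              = ({0..1} \<inter> {..<1}) \<times> {x \<in> topspace (top_of_set {0..1::real}). \<beta> x \<in> V}"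
        using False unfolding K_def by (auto split: if_splits)
      have o1: "openin (top_of_set {0..1::real}) ({0..1} \<inter> {..<1})"
        unfolding openin_open by (rule exI[of _ "{..<1}"]) auto
      have o2: "openin (top_of_set {0..1::real}) {x \<in> topspace (top_of_set {0..1::real}). \<beta> x \<in> V}"
        using bp(1) V unfolding pathin_def continuous_map by blast
      show ?thesis unfolding eq openin_prod_Times_iff using o1 o2 by blast
    qed
  qed
  show ?thesis
    unfolding homotopic_with_def
    by (rule exI[of _ K]) (use Kc bp in \<open>auto simp: K_def\<close>)
qed



lemma main_neutral:
  fixes B :: "'b topology" and E :: "'e topology" and p :: "'e \<Rightarrow> 'b"
    and b0 :: 'b and \<alpha> :: "real \<Rightarrow> 'b"
  assumes b0: "b0 \<in> topspace B"
    and cov: "disk_hedgehog_covering E B p"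
    and sl: "small_loop B b0 \<alpha>"
    and a: "is_lift E p \<alpha> a"
  shows "a 1 = a 0"
proof -
  let ?P = "\<lambda>h. h 0 = b0 \<and> h 1 = b0"
  have al: "loop_at B b0 \<alpha>" using sl unfolding small_loop_def by blast
  have SL: "\<And>U. openin B U \<Longrightarrow> b0 \<in> U \<Longrightarrow> \<exists>\<beta>. loop_at B b0 \<beta> \<and> \<beta> ` {0..1} \<subseteq> U \<and>
            homotopic_with ?P (top_of_set {0..1}) B \<alpha> \<beta>"
    using sl unfolding small_loop_def by blast
  have ap: "pathin E a" and alift: "\<forall>t\<in>{0..1}. p (a t) = \<alpha> t" using a unfolding is_lift_def by auto
  have a0E: "a 0 \<in> topspace E" and a1E: "a 1 \<in> topspace E" using pathin_01[OF ap] by auto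
  have pa0: "p (a 0) = b0" using alift al unfolding loop_at_def by auto
  have pa1: "p (a 1) = b0" using alift al unfolding loop_at_def by auto
  show ?thesis
  proof (cases "\<exists>T. openin B T \<and> b0 \<in> T \<and> (\<forall>S. openin B S \<and> b0 \<in> S \<and> S \<subseteq> T \<longrightarrow> S = T)")
    case True
    then obtain T where T: "openin B T" "b0 \<in> T" "\<And>S. openin B S \<Longrightarrow> b0 \<in> S \<Longrightarrow> S \<subseteq> T \<Longrightarrow> S = T"
      by blast
    have Tmin: "T \<subseteq> V" if "openin B V" "b0 \<in> V" for V
    proof -
      have "openin B (T \<inter> V)" using T(1) that(1) by (rule openin_Int)
      then have "T \<inter> V = T" using T that by blast
      then show ?thesis by blast
    qed
    obtain \<beta> where \<beta>: "loop_at B b0 \<beta>" "\<beta> ` {0..1} \<subseteq> T" "homotopic_with ?P (top_of_set {0..1}) B \<alpha> \<beta>"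
      using SL[OF T(1,2)] by blast
    have "homotopic_with ?P (top_of_set {0..1}) B \<beta> (\<lambda>x. b0)"
      by (rule null_in_min[OF Tmin b0 \<beta>(1,2)])
    then have h: "homotopic_with ?P (top_of_set {0..1}) B \<alpha> (\<lambda>x. b0)"
      using \<beta>(3) homotopic_with_trans by blast
    have "pathin E (\<lambda>t. a 0)" unfolding pathin_def continuous_map_const using a0E by blast
    then have c: "is_lift E p (\<lambda>x. b0) (\<lambda>t. a 0)" unfolding is_lift_def using pa0 by simp
    have "a 1 = (\<lambda>t. a 0) 1" by (rule homL[OF cov h a c refl])
    then show ?thesis by simp
  next
    case False
    then have strict: "\<And>T. openin B T \<Longrightarrow> b0 \<in> T \<Longrightarrow> \<exists>S. openin B S \<and> b0 \<in> S \<and> S \<subseteq> T \<and> S \<noteq> T"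
      by blast
    define S where "S = {U. openin B U \<and> b0 \<in> U}"
    define R :: "'b set \<Rightarrow> 'b set \<Rightarrow> bool" where "R = (\<lambda>t s. s \<subseteq> t)"
    have dir: "directed_set S R"
      unfolding directed_set_def
    proof (intro conjI ballI impI)
      show "S \<noteq> {}" unfolding S_def using b0 by auto
    next
      fix x y assume "x \<in> S" "y \<in> S"
      then show "\<exists>c\<in>S. R x c \<and> R y c" unfolding S_def R_def
        by (intro bexI[of _ "x \<inter> y"]) auto
    qed (auto simp: R_def)
    define \<beta> where "\<beta> = (\<lambda>U. SOME \<beta>. loop_at B b0 \<beta> \<and> \<beta> ` {0..1} \<subseteq> U \<and>
            homotopic_with ?P (top_of_set {0..1}) B \<alpha> \<beta>)"
    have \<beta>: "loop_at B b0 (\<beta> U) \<and> \<beta> U ` {0..1} \<subseteq> U \<and> homotopic_with ?P (top_of_set {0..1}) B \<alpha> (\<beta> U)"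
      if "U \<in> S" for U
    proof -
      have "\<exists>\<beta>. loop_at B b0 \<beta> \<and> \<beta> ` {0..1} \<subseteq> U \<and> homotopic_with ?P (top_of_set {0..1}) B \<alpha> \<beta>"
        using SL that unfolding S_def by blast
      then show ?thesis unfolding \<beta>_def by (rule someI_ex)
    qed
    define f :: "('b set \<times> complex) option \<Rightarrow> 'b" where
      "f = (\<lambda>x. case x of None \<Rightarrow> b0 | Some w \<Rightarrow> \<beta> (fst w) (rr (Re (snd w))))"
    have fspike: "f (spike zh s z) = \<beta> s (rr (Re z))" if "s \<in> S" for s z
    proof (cases "z = - (1/2)")
      case True
      have "rr (Re z) = 0" using True unfolding rr_def by simp
      moreover have "\<beta> s 0 = b0" using \<beta>[OF that] unfolding loop_at_def by blast
      ultimately show ?thesis using True unfolding f_def spike_def by simp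
    next
      case False
      then show ?thesis unfolding f_def spike_def by simp
    qed
    let ?X = "hedgehog_top S R zh :: ('b set \<times> complex) option topology"
    have fc: "continuous_map ?X B f"
    proof (rule hh_cont_from[OF dir])
      fix s assume s: "s \<in> S"
      have bp: "pathin B (\<beta> s)" using \<beta>[OF s] unfolding loop_at_def by blast
      have "continuous_map (top_of_set (cball 0 1)) B (\<beta> s \<circ> (\<lambda>z. rr (Re z)))"
        using continuous_map_compose[OF rRe_cont] bp unfolding pathin_def by blast
      then show "continuous_map (top_of_set (cball 0 1)) B (f \<circ> spike zh s)"
        by (rule continuous_map_eq) (simp add: fspike[OF s])
    next
      show "f None \<in> topspace B" unfolding f_def using b0 by simp
    next
      fix V assume V: "openin B V" "f None \<in> V"
      then have VS: "V \<in> S" unfolding S_def f_def by simp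
      show "\<exists>t\<in>S. \<forall>s\<in>S. strictly_above R s t \<longrightarrow> (\<forall>z\<in>cball 0 1. f (spike zh s z) \<in> V)"
      proof (intro bexI[OF _ VS] ballI impI)
        fix s z assume s: "s \<in> S" "strictly_above R s V" and z: "z \<in> cball (0::complex) 1"
        have "s \<subseteq> V" using s(2) unfolding strictly_above_def R_def by blast
        moreover have "\<beta> s (rr (Re z)) \<in> s" using \<beta>[OF s(1)] rr_range by blast
        ultimately show "f (spike zh s z) \<in> V" using fspike[OF s(1)] by auto
      qed
    qed
    have disk: "is_disk_hedgehog ?X"
      unfolding is_disk_hedgehog_def using dir
      by (intro exI[of _ S] exI[of _ R] exI[of _ "zh :: 'b set \<Rightarrow> complex"]) auto
    have None: "None \<in> topspace ?X" unfolding topspace_hh[OF dir] hedgehog_carrier_def by simp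
    have f0: "f None = p (a 0)" unfolding f_def using pa0 by simp
    have cov': "P_covering (is_disk_hedgehog :: ('b set \<times> complex) option topology \<Rightarrow> bool) E B p"
      using cov unfolding disk_hedgehog_covering_def .
    obtain g where g: "continuous_map ?X E g" "\<forall>x\<in>topspace ?X. p (g x) = f x" "g None = a 0"
      by (rule cov_D[OF cov' a0E disk None fc f0]) blast
    have endpt: "g (spike zh s (1/2)) = a 1" if s: "s \<in> S" for s
    proof -
      let ?L = "\<lambda>x. g (spike zh s (complex_of_real (x - 1/2)))"
      have pin: "complex_of_real (x - 1/2) \<in> cball 0 1" if "x \<in> {0..1}" for x
        unfolding mem_cball_0 norm_of_real using that by auto
      have cc: "continuous_map (top_of_set {0..1}) (top_of_set (cball 0 1)) (\<lambda>x. complex_of_real (x - 1/2))"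
      proof -
        have "continuous_on {0..1} (\<lambda>x. complex_of_real (x - 1/2))" by (intro continuous_intros)
        then show ?thesis using pin by auto
      qed
      have "pathin E ?L"
        unfolding pathin_def
        using continuous_map_compose[OF continuous_map_compose[OF cc spike_cont[OF dir s]] g(1)]
        by (simp add: o_def)
      moreover have "\<forall>x\<in>{0..1}. p (?L x) = \<beta> s x"
      proof
        fix x :: real assume x: "x \<in> {0..1}"
        have "spike zh s (complex_of_real (x - 1/2)) \<in> topspace ?X"
          unfolding topspace_hh[OF dir] using spike_in_carrier[OF s pin[OF x]] .
        then have "p (?L x) = f (spike zh s (complex_of_real (x - 1/2)))" using g(2) by blast
        also have "\<dots> = \<beta> s (rr (Re (complex_of_real (x - 1/2))))" by (rule fspike[OF s])
        also have "\<dots> = \<beta> s x" unfolding Re_complex_of_real using rr_id[OF x] by simp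
        finally show "p (?L x) = \<beta> s x" .
      qed
      ultimately have Ll: "is_lift E p (\<beta> s) ?L" unfolding is_lift_def by blast
      have L0: "a 0 = ?L 0" using g(3) unfolding spike_def by simp
      have hs: "homotopic_with ?P (top_of_set {0..1}) B \<alpha> (\<beta> s)" using \<beta>[OF s] by blast
      have "a 1 = ?L 1" by (rule homL[OF cov hs a Ll L0])
      then show ?thesis by simp
    qed
    have "a 1 = a 0"
    proof (rule indist[OF cov a0E a1E])
      show "p (a 0) = p (a 1)" using pa0 pa1 by simp
    next
      fix W assume W: "openin E W" "a 0 \<in> W"
      have gW: "g None \<in> W" using W(2) g(3) by simp
      obtain t where t: "t \<in> S" "\<forall>s\<in>S. strictly_above R s t \<longrightarrow> (\<forall>z\<in>cball 0 1. g (spike zh s z) \<in> W)"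
        using hh_nbhd[OF dir g(1) W(1) gW] by blast
      have tS: "openin B t" "b0 \<in> t" using t(1) unfolding S_def by auto
      obtain s where s: "openin B s" "b0 \<in> s" "s \<subseteq> t" "s \<noteq> t"
        using strict[OF tS] by blast
      have sS: "s \<in> S" using s unfolding S_def by blast
      have "strictly_above R s t" unfolding strictly_above_def R_def using s by blast
      then have all: "\<forall>z\<in>cball 0 1. g (spike zh s z) \<in> W" using t(2) sS by blast
      have "(1/2::complex) \<in> cball 0 1" by simp
      with all have "g (spike zh s (1/2)) \<in> W" by (rule bspec)
      then show "a 1 \<in> W" using endpt[OF sS] by simp
    qed
    then show ?thesis .
  qed
qed


theorem proposition7p8:
  fixes B :: "'b topology" and E :: "'e topology" and p :: "'e \<Rightarrow> 'b"
    and b0 :: 'b and \<alpha> :: "real \<Rightarrow> 'b"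
  assumes "path_connected_space B"
    and "b0 \<in> topspace B"
    and "disk_hedgehog_covering E B p"
    and "small_loop B b0 \<alpha>"
  shows "monodromy_neutral E p \<alpha> \<and> monodromy_equiv E p \<alpha> (\<lambda>t. b0)"
proof
  show neu: "monodromy_neutral E p \<alpha>"
    unfolding monodromy_neutral_def
    using main_neutral[OF assms(2,3,4)] by blast
  show "monodromy_equiv E p \<alpha> (\<lambda>t. b0)"
    unfolding monodromy_equiv_def
  proof (intro allI impI)
    fix a b assume ab: "is_lift E p \<alpha> a \<and> is_lift E p (\<lambda>t. b0) b \<and> a 0 = b 0"
    have a1: "a 1 = a 0" using main_neutral[OF assms(2,3,4)] ab by blast
    have bp: "pathin E b" and bl: "\<forall>t\<in>{0..1}. p (b t) = b0" using ab unfolding is_lift_def by auto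
    have "\<forall>t\<in>{0..1}. p (b t) = p (b 0)"
    proof
      fix t :: real assume "t \<in> {0..1}"
      then have "p (b t) = b0" using bl by blast
      moreover have "p (b 0) = b0" using bl by simp
      ultimately show "p (b t) = p (b 0)" by simp
    qed
    from const_lift[OF assms(3) bp this] have "b 1 = b 0" by (rule bspec) simp
    then show "a 1 = b 1" using a1 ab by simp
  qed
qed

end
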